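(* Let $x_0>0$ and let $(U_n)_{n\ge1}$ be random utility functions satisfying: $\sup_n\|U_n^+(\cdot,x_0)\|_1<\infty$, $\sup_n\|U_n^-(\cdot,x_0)\|_1<\infty$ and $\sup_n\|U_n'(\cdot,x_0)\|_q<\infty$ for some $q>1$. Suppose that for all $\varepsilon\in(0,x_0)$ and all $C\ge0$, $$\lim_{n\to\infty}\inf_{P\in\mathcal Q^T}P\Big(\int_{x_0-\varepsilon/2}^{x_0}U_n''(\cdot,v)\,dv<-\frac C\varepsilon\Big)=1.$$ Then for all $0\le x<x_0$ and $M\ge0$, $\lim_{n\to\infty}\inf_{P\in\mathcal Q^T}P(U_n(\cdot,x)\le -M)=1$.
   Context: Framework: $T\ge1$; Polish spaces $\Omega_1,\dots,\Omega_T$; $\Omega^t:=\Omega_1\times\cdots\times\Omega_t$. $\mathfrak P(X)$: Borel probability measures on Polish $X$; $\mathcal B_c(X)$: universal $\sigma$-algebra, each $P$ extended to it. $\mathcal SK_t$: universally measurable stochastic kernels on $\Omega_t$ given $\Omega^{t-1}$; $P\otimes p(A):=\int\int1_A(\omega^{t-1},\omega_t)p(d\omega_t,\omega^{t-1})P(d\omega^{t-1})$. Given random sets $\mathcal Q_{t+1}:\Omega^t\twoheadrightarrow\mathfrak P(\Omega_{t+1})$, $\mathcal Q^T:=\{Q_1\otimes q_2\otimes\cdots\otimes q_T:Q_1\in\mathcal Q_1,\ q_{s+1}\in\mathcal SK_{s+1},\ q_{s+1}(\cdot,\omega^s)\in\mathcal Q_{s+1}(\omega^s)\ Q_s\text{-a.s.}\}$.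 For universally measurable $X$ on $\Omega^T$ and $r\in(0,\infty)$, $\|X\|_r:=(\sup_{P\in\mathcal Q^T}E_P|X|^r)^{1/r}$. A random utility function is $U:\Omega^T\times(0,\infty)\to\mathbb R$ with $U(\cdot,x)$ universally measurable for each $x>0$ and $U(\omega^T,\cdot)$ concave, strictly increasing and twice continuously differentiable on $(0,\infty)$ for each $\omega^T$, extended to $0$ by right-continuity and by $-\infty$ on $(-\infty,0)$; $U',U''$ are derivatives in $x$. *)

theory Defs
  imports "HOL-Probability.Probability"
begin

definition Polish_space :: "'a topology \<Rightarrow> bool" where
  "Polish_space X \<longleftrightarrow> completely_metrizable_space X \<and> separable_space X"

definition borel_of :: "'a topology \<Rightarrow> 'a measure" where
  "borel_of X = sigma (topspace X) {U. openin X U}"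

definition prob_meas :: "'a topology \<Rightarrow> 'a measure set" where
  "prob_meas X = {P. prob_space P \<and> sets P = sets (borel_of X)}"

definition universal_sets :: "'a topology \<Rightarrow> 'a set set" where
  "universal_sets X = Pow (topspace X) \<inter> (\<Inter>P\<in>prob_meas X. sets (completion P))"

definition univ_measurable :: "'a topology \<Rightarrow> ('a \<Rightarrow> real) \<Rightarrow> bool" where
  "univ_measurable X f \<longleftrightarrow> (\<forall>B\<in>sets borel. f -` B \<inter> topspace X \<in> universal_sets X)"

text \<open>\<open>\<Omega>^t\<close>, realised as functions on \<open>{1..t}\<close> (extensional, \<open>undefined\<close> elsewhere).\<close>
definition path_top :: "(nat \<Rightarrow> 'a topology) \<Rightarrow> nat \<Rightarrow> (nat \<Rightarrow> 'a) topology" where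
  "path_top X t = product_topology X {1..t}"

definition path_space :: "(nat \<Rightarrow> 'a topology) \<Rightarrow> nat \<Rightarrow> (nat \<Rightarrow> 'a) set" where
  "path_space X t = topspace (path_top X t)"

definition stoch_kernel :: "(nat \<Rightarrow> 'a topology) \<Rightarrow> nat \<Rightarrow> ((nat \<Rightarrow> 'a) \<Rightarrow> 'a measure) \<Rightarrow> bool" where
  "stoch_kernel X t p \<longleftrightarrow>
     (\<forall>\<omega>\<in>path_space X (t - 1). p \<omega> \<in> prob_meas (X t)) \<and>
     (\<forall>A\<in>sets (borel_of (X t)). univ_measurable (path_top X (t - 1)) (\<lambda>\<omega>. measure (p \<omega>) A))"

text \<open>\<open>P \<otimes> p\<close> for \<open>P\<close> on \<open>\<Omega>^(t-1)\<close> (extended to universal sets via its completion).\<close>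
definition kcomp :: "(nat \<Rightarrow> 'a topology) \<Rightarrow> nat \<Rightarrow> (nat \<Rightarrow> 'a) measure
     \<Rightarrow> ((nat \<Rightarrow> 'a) \<Rightarrow> 'a measure) \<Rightarrow> (nat \<Rightarrow> 'a) measure" where
  "kcomp X t P p = measure_of (path_space X t) (sets (borel_of (path_top X t)))
     (\<lambda>A. \<integral>\<^sup>+\<omega>. (\<integral>\<^sup>+y. indicator A (fun_upd \<omega> t y) \<partial>(p \<omega>)) \<partial>(completion P))"

text \<open>\<open>Q_1 \<otimes> q_2 \<otimes> ... \<otimes> q_t\<close>, starting from the point mass on the one-point space \<open>\<Omega>^0\<close>
  (so \<open>q 1\<close> plays the role of \<open>Q_1\<close>).\<close>
primrec kcomp_seq :: "(nat \<Rightarrow> 'a topology) \<Rightarrow> (nat \<Rightarrow> (nat \<Rightarrow> 'a) \<Rightarrow> 'a measure)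
     \<Rightarrow> nat \<Rightarrow> (nat \<Rightarrow> 'a) measure" where
  "kcomp_seq X q 0 = return (borel_of (path_top X 0)) (\<lambda>_. undefined)"
| "kcomp_seq X q (Suc t) = kcomp X (Suc t) (kcomp_seq X q t) (q (Suc t))"

text \<open>\<open>\<Q>^T\<close> for random sets \<open>Q (s+1) : \<Omega>^s \<rightrightarrows> \<P>(\<Omega>_(s+1))\<close>; \<open>Q 1\<close> is evaluated at the unique
  point of \<open>\<Omega>^0\<close> and represents \<open>\<Q>_1\<close>.\<close>
definition QT :: "(nat \<Rightarrow> 'a topology) \<Rightarrow> (nat \<Rightarrow> (nat \<Rightarrow> 'a) \<Rightarrow> 'a measure set) \<Rightarrow> nat
     \<Rightarrow> (nat \<Rightarrow> 'a) measure set" where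
  "QT X Q T = {kcomp_seq X q T | q. \<forall>t\<in>{1..T}. stoch_kernel X t (q t) \<and>
      (AE \<omega> in completion (kcomp_seq X q (t - 1)). q t \<omega> \<in> Q t \<omega>)}"

definition rnorm :: "(nat \<Rightarrow> 'a topology) \<Rightarrow> (nat \<Rightarrow> (nat \<Rightarrow> 'a) \<Rightarrow> 'a measure set) \<Rightarrow> nat
     \<Rightarrow> real \<Rightarrow> ((nat \<Rightarrow> 'a) \<Rightarrow> real) \<Rightarrow> ereal" where
  "rnorm X Q T r f =
     (let s = (SUP P\<in>QT X Q T. \<integral>\<^sup>+\<omega>. ennreal (\<bar>f \<omega>\<bar> powr r) \<partial>(completion P))
      in if s = \<infinity> then \<infinity> else ereal (enn2real s powr (1 / r)))"

definition random_utility :: "(nat \<Rightarrow> 'a topology) \<Rightarrow> nat \<Rightarrow> ((nat \<Rightarrow> 'a) \<Rightarrow> real \<Rightarrow> real) \<Rightarrow> bool" where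
  "random_utility X T U \<longleftrightarrow>
     (\<forall>x>0. univ_measurable (path_top X T) (\<lambda>\<omega>. U \<omega> x)) \<and>
     (\<forall>\<omega>\<in>path_space X T.
        concave_on {0<..} (U \<omega>) \<and> strict_mono_on {0<..} (U \<omega>) \<and>
        (\<forall>x>0. U \<omega> differentiable at x \<and> deriv (U \<omega>) differentiable at x) \<and>
        continuous_on {0<..} (deriv (deriv (U \<omega>))))"

definition util_ext :: "((nat \<Rightarrow> 'a) \<Rightarrow> real \<Rightarrow> real) \<Rightarrow> (nat \<Rightarrow> 'a) \<Rightarrow> real \<Rightarrow> ereal" where
  "util_ext U \<omega> x = (if x > 0 then ereal (U \<omega> x)
      else if x = 0 then Lim (at_right 0) (\<lambda>y. ereal (U \<omega> y)) else -\<infinity>)"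

end

theory Submission imports Defs begin

lemma space_borel_of[simp]: "space (borel_of Y) = topspace Y"
  unfolding borel_of_def by (rule space_measure_of_conv)

lemma path_space_Suc:
  assumes "\<omega> \<in> path_space X t" "y \<in> topspace (X (Suc t))"
  shows "fun_upd \<omega> (Suc t) y \<in> path_space X (Suc t)"
  using assms unfolding path_space_def path_top_def topspace_product_topology
  by (auto simp: PiE_def extensional_def Pi_def)

lemma sets_kcomp: "sets (kcomp X t P p) = sets (borel_of (path_top X t))"
  and space_kcomp: "space (kcomp X t P p) = path_space X t"
proof -
  let ?M = "borel_of (path_top X t)"
  have sp: "space ?M = path_space X t" by (simp add: path_space_def)
  show "sets (kcomp X t P p) = sets (borel_of (path_top X t))"
    unfolding kcomp_def sp[symmetric]
    by (rule sigma_algebra.sets_measure_of_eq[OF sets.sigma_algebra_axioms])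
  show "space (kcomp X t P p) = path_space X t"
    unfolding kcomp_def by (rule space_measure_of_conv)
qed

lemma null_nn: assumes "\<forall>A. emeasure M A = 0" shows "integral\<^sup>N M f = 0"
proof -
  have "AE x in M. f x = 0"
    by (rule AE_I'[of "space M"]) (auto simp: assms)
  then have "integral\<^sup>N M f = integral\<^sup>N M (\<lambda>_. 0)" by (rule nn_integral_cong_AE)
  then show ?thesis by simp
qed

lemma null_completion: assumes "\<forall>A. emeasure M A = 0" shows "\<forall>A. emeasure (completion M) A = 0"
proof
  fix A show "emeasure (completion M) A = 0"
    by (cases "A \<in> sets (completion M)") (auto simp: assms emeasure_notin_sets)
qed

lemma kcomp_seq_cases:
  assumes "\<forall>s\<in>{1..t}. stoch_kernel X s (q s)"
  shows "space (kcomp_seq X q t) = path_space X t \<and>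
         sets (kcomp_seq X q t) = sets (borel_of (path_top X t)) \<and>
         (prob_space (kcomp_seq X q t) \<or> (\<forall>A. emeasure (kcomp_seq X q t) A = 0))"
  using assms
proof (induction t)
  case 0
  have "(\<lambda>_. undefined) \<in> path_space X 0"
    by (simp add: path_space_def path_top_def topspace_product_topology)
  then show ?case
    by (auto intro!: prob_space_return simp: path_space_def)
next
  case (Suc t)
  let ?P = "kcomp_seq X q t"
  let ?p = "q (Suc t)"
  let ?K = "kcomp_seq X q (Suc t)"
  have IH: "space ?P = path_space X t \<and> sets ?P = sets (borel_of (path_top X t)) \<and>
         (prob_space ?P \<or> (\<forall>A. emeasure ?P A = 0))"
    using Suc by auto
  have sk: "stoch_kernel X (Suc t) ?p" using Suc.prems by auto
  define \<mu> where "\<mu> = (\<lambda>A. \<integral>\<^sup>+\<omega>. (\<integral>\<^sup>+y. indicator A (fun_upd \<omega> (Suc t) y) \<partial>(?p \<omega>)) \<partial>(completion ?P))"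
  have K: "?K = measure_of (path_space X (Suc t)) (sets (borel_of (path_top X (Suc t)))) \<mu>"
    by (simp add: kcomp_def \<mu>_def)
  have em: "emeasure ?K = (\<lambda>B. if B \<in> sigma_sets (path_space X (Suc t)) (sets (borel_of (path_top X (Suc t)))) \<and> measure_space (path_space X (Suc t)) (sigma_sets (path_space X (Suc t)) (sets (borel_of (path_top X (Suc t))))) \<mu> then \<mu> B else 0)"
    unfolding K by (rule emeasure_measure_of_conv)
  have ss: "space ?K = path_space X (Suc t)" "sets ?K = sets (borel_of (path_top X (Suc t)))"
    by (simp_all only: kcomp_seq.simps(2) space_kcomp sets_kcomp)
  have "prob_space ?K \<or> (\<forall>A. emeasure ?K A = 0)"
  proof (cases "\<forall>A. emeasure ?P A = 0")
    case True
    then have "\<forall>A. emeasure (completion ?P) A = 0" by (rule null_completion)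
    then have "\<forall>A. \<mu> A = 0" unfolding \<mu>_def using null_nn by blast
    then show ?thesis using em by auto
  next
    case False
    then have pr: "prob_space ?P" using IH by auto
    then have prc: "prob_space (completion ?P)" by (rule prob_space.prob_space_completion)
    show ?thesis
    proof (cases "\<forall>A. emeasure ?K A = 0")
      case False
      then obtain A where "emeasure ?K A \<noteq> 0" by auto
      then have msp: "measure_space (path_space X (Suc t)) (sigma_sets (path_space X (Suc t)) (sets (borel_of (path_top X (Suc t))))) \<mu>"
        using em by (auto split: if_splits)
      have top: "path_space X (Suc t) \<in> sigma_sets (path_space X (Suc t)) (sets (borel_of (path_top X (Suc t))))"
        by (rule sigma_sets.Basic) (metis sets.top space_borel_of path_space_def)
      have "\<mu> (path_space X (Suc t)) = \<integral>\<^sup>+\<omega>. 1 \<partial>(completion ?P)"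
        unfolding \<mu>_def
      proof (rule nn_integral_cong)
        fix \<omega> assume "\<omega> \<in> space (completion ?P)"
        then have w: "\<omega> \<in> path_space X t" using IH by simp
        then have pm: "?p \<omega> \<in> prob_meas (X (Suc t))" using sk unfolding stoch_kernel_def by auto
        then have ps: "prob_space (?p \<omega>)" and "sets (?p \<omega>) = sets (borel_of (X (Suc t)))"
          unfolding prob_meas_def by auto
        then have sp: "space (?p \<omega>) = topspace (X (Suc t))"
          by (metis sets_eq_imp_space_eq space_borel_of)
        have "(\<integral>\<^sup>+y. indicator (path_space X (Suc t)) (fun_upd \<omega> (Suc t) y) \<partial>(?p \<omega>)) = (\<integral>\<^sup>+y. 1 \<partial>(?p \<omega>))"
          by (rule nn_integral_cong) (auto simp: sp path_space_Suc[OF w])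
        also have "\<dots> = 1" using ps by (simp add: prob_space.emeasure_space_1)
        finally show "(\<integral>\<^sup>+y. indicator (path_space X (Suc t)) (fun_upd \<omega> (Suc t) y) \<partial>(?p \<omega>)) = 1" .
      qed
      also have "\<dots> = 1" using prc pr by (simp add: prob_space.emeasure_space_1)
      finally have "emeasure ?K (space ?K) = 1" using em msp top ss by simp
      then show ?thesis by (auto intro: prob_spaceI)
    qed auto
  qed
  then show ?case using ss by auto
qed


lemma det_bound:
  fixes u :: "real \<Rightarrow> real"
  assumes conc: "concave_on {0<..} u" and sm: "strict_mono_on {0<..} u"
    and dif: "\<forall>x>0. u differentiable at x \<and> deriv u differentiable at x"
    and cont: "continuous_on {0<..} (deriv (deriv u))"
    and x: "0 < x" "x < x0" and C: "C \<ge> 0"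
    and I: "integral {x0 - (x0 - x)/2..x0} (\<lambda>v. deriv (deriv u) v) < - C / (x0 - x)"
  shows "u x \<le> u x0 - C / 2"
proof -
  define e where "e = x0 - x"
  define y where "y = x0 - e/2"
  have e: "e > 0" using x by (simp add: e_def)
  have y: "0 < y" "y < x0" "x < y" "y - x = e/2" using x by (auto simp: y_def e_def field_simps)
  have D: "\<And>z. z > 0 \<Longrightarrow> (u has_real_derivative deriv u z) (at z)"
    using dif DERIV_deriv_iff_real_differentiable by blast
  have D2: "\<And>z. z > 0 \<Longrightarrow> (deriv u has_real_derivative deriv (deriv u) z) (at z)"
    using dif DERIV_deriv_iff_real_differentiable by blast
  have "(deriv (deriv u) has_integral (deriv u x0 - deriv u y)) {y..x0}"
  proof (rule fundamental_theorem_of_calculus)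
    show "y \<le> x0" using y by simp
    fix z assume "z \<in> {y..x0}"
    then have "z > 0" using y by auto
    then show "(deriv u has_vector_derivative deriv (deriv u) z) (at z within {y..x0})"
      using D2 has_real_derivative_iff_has_vector_derivative has_field_derivative_at_within by blast
  qed
  then have "integral {y..x0} (deriv (deriv u)) = deriv u x0 - deriv u y" by (rule integral_unique)
  moreover have "integral {y..x0} (deriv (deriv u)) < - C / e" using I by (simp add: y_def e_def)
  ultimately have dy: "deriv u y > deriv u x0 + C / e" by simp
  have "mono_on {0<..} u" using sm by (rule strict_mono_on_imp_mono_on)
  then have "deriv u x0 \<ge> 0"
    by (rule mono_on_imp_deriv_nonneg[OF _ D]) (use x in \<open>auto simp: interior_open\<close>)
  then have dy2: "deriv u y \<ge> C / e" using dy by simp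
  have "convex_on {0<..} (\<lambda>z. - u z)" using conc by (simp add: concave_on_def)
  then have "(- u x) - (- u y) \<ge> (- deriv u y) * (x - y)"
    by (rule convex_on_imp_above_tangent)
       (use y x in \<open>auto intro!: derivative_eq_intros has_field_derivative_at_within[OF D] simp: interior_open\<close>)
  then have "u x \<le> u y - deriv u y * (y - x)" by (simp add: algebra_simps)
  also have "deriv u y * (y - x) \<ge> C / e * (e/2)"
  proof -
    have "0 \<le> C / e" using C e by simp
    then show ?thesis using dy2 y e by (intro mult_mono) auto
  qed
  then have "u y - deriv u y * (y - x) \<le> u y - C/2" using e by simp
  also have "u y \<le> u x0" using sm y by (auto simp: strict_mono_on_def intro!: less_imp_le)
  finally show ?thesis by simp
qed

lemma lim_right0:
  fixes u :: "real \<Rightarrow> real"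
  assumes mono: "mono_on {0<..} u"
  shows "((\<lambda>y. ereal (u y)) \<longlongrightarrow> (INF k. ereal (u (1 / Suc k)))) (at_right 0)"
proof (rule order_tendstoI)
  let ?L = "INF k. ereal (u (1 / Suc k))"
  fix a assume a: "a < ?L"
  show "\<forall>\<^sub>F y in at_right 0. a < ereal (u y)"
    using eventually_at_right_less[of "0::real"]
  proof (rule eventually_mono)
    fix y :: real assume y: "0 < y"
    obtain k :: nat where k: "1 / Suc k < y"
      using y by (metis nat_approx_posE)
    have "?L \<le> ereal (u (1 / Suc k))" by (rule INF_lower) simp
    also have "u (1 / Suc k) \<le> u y" using mono k y by (intro mono_onD[OF mono]) auto
    finally show "a < ereal (u y)" using a by simp
  qed
next
  let ?L = "INF k. ereal (u (1 / Suc k))"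
  fix a assume a: "?L < a"
  then obtain k where k: "ereal (u (1 / Suc k)) < a" by (auto simp: INF_less_iff)
  show "\<forall>\<^sub>F y in at_right 0. ereal (u y) < a"
    unfolding eventually_at_right_field
  proof -
    show "\<exists>b>0. \<forall>y>0. y < b \<longrightarrow> ereal (u y) < a"
    proof (intro exI conjI allI impI)
      show "(0::real) < 1 / Suc k" by simp
      fix y :: real assume "0 < y" "y < 1 / Suc k"
      then have "u y \<le> u (1 / Suc k)" by (intro mono_onD[OF mono]) auto
      then show "ereal (u y) < a" using k by (meson ereal_less_eq(3) order_le_less_trans)
    qed
  qed
qed


lemma univ_meas:
  assumes "prob_space P" "sets P = sets (borel_of Y)" "univ_measurable Y f"
  shows "f \<in> borel_measurable (completion P)"
proof (rule measurableI)
  have Pm: "P \<in> prob_meas Y" using assms by (simp add: prob_meas_def)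
  have sp: "space P = topspace Y" by (metis assms(2) sets_eq_imp_space_eq space_borel_of)
  fix A :: "real set" assume "A \<in> sets borel"
  then have "f -` A \<inter> topspace Y \<in> universal_sets Y" using assms(3) by (simp add: univ_measurable_def)
  then show "f -` A \<inter> space (completion P) \<in> sets (completion P)"
    using Pm sp by (auto simp: universal_sets_def)
qed simp

lemma set_le_meas:
  fixes f :: "'b \<Rightarrow> real"
  assumes "f \<in> borel_measurable M"
  shows "{\<omega>\<in>space M. f \<omega> \<le> c} \<in> sets M"
  using assms by measurable

lemma set_le_meas_e:
  fixes f :: "'b \<Rightarrow> ereal"
  assumes "f \<in> borel_measurable M"
  shows "{\<omega>\<in>space M. f \<omega> \<le> c} \<in> sets M"
  using assms by measurable

lemma set_less_meas:
  fixes f :: "'b \<Rightarrow> real"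
  assumes "f \<in> borel_measurable M"
  shows "{\<omega>\<in>space M. c < f \<omega>} \<in> sets M"
  using assms by measurable

lemma inf_meas:
  fixes f :: "nat \<Rightarrow> 'b \<Rightarrow> real"
  assumes "\<And>k. f k \<in> borel_measurable M"
  shows "(\<lambda>\<omega>. INF k. ereal (f k \<omega>)) \<in> borel_measurable M"
  using assms by measurable


theorem lemma4p5:
  fixes X :: "nat \<Rightarrow> 'a topology" and T :: nat
    and Q :: "nat \<Rightarrow> (nat \<Rightarrow> 'a) \<Rightarrow> 'a measure set"
    and U :: "nat \<Rightarrow> (nat \<Rightarrow> 'a) \<Rightarrow> real \<Rightarrow> real"
    and x0 q :: real
  assumes T: "T \<ge> 1"
    and polish: "\<forall>t\<in>{1..T}. Polish_space (X t)"
    and x0: "x0 > 0"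
    and util: "\<forall>n. random_utility X T (U n)"
    and q: "q > 1"
    and pos: "(SUP n. rnorm X Q T 1 (\<lambda>\<omega>. max (U n \<omega> x0) 0)) < \<infinity>"
    and neg: "(SUP n. rnorm X Q T 1 (\<lambda>\<omega>. max (- U n \<omega> x0) 0)) < \<infinity>"
    and der: "(SUP n. rnorm X Q T q (\<lambda>\<omega>. deriv (U n \<omega>) x0)) < \<infinity>"
    and curv: "\<forall>\<epsilon>. 0 < \<epsilon> \<and> \<epsilon> < x0 \<longrightarrow> (\<forall>C\<ge>0.
       (\<lambda>n. INF P\<in>QT X Q T. ereal (measure (completion P)
          {\<omega>\<in>path_space X T. integral {x0 - \<epsilon>/2..x0} (\<lambda>v. deriv (deriv (U n \<omega>)) v) < - C / \<epsilon>}))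
       \<longlonglongrightarrow> 1)"
  shows "\<forall>x. 0 \<le> x \<and> x < x0 \<longrightarrow> (\<forall>M\<ge>0.
       (\<lambda>n. INF P\<in>QT X Q T. ereal (measure (completion P)
          {\<omega>\<in>path_space X T. util_ext (U n) \<omega> x \<le> - ereal M}))
       \<longlonglongrightarrow> 1)"
proof -
  define \<Omega> where "\<Omega> = path_space X T"
  let ?Q = "QT X Q T"
  define A where "A = (\<lambda>\<epsilon> C n. {\<omega>\<in>\<Omega>. integral {x0 - \<epsilon>/2..x0} (\<lambda>v. deriv (deriv (U n \<omega>)) v) < - C / \<epsilon>})"
  have curv': "\<And>\<epsilon> C. 0 < \<epsilon> \<Longrightarrow> \<epsilon> < x0 \<Longrightarrow> C \<ge> 0 \<Longrightarrow>
      (\<lambda>n. INF P\<in>?Q. ereal (measure (completion P) (A \<epsilon> C n))) \<longlonglongrightarrow> 1"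
    using curv unfolding A_def \<Omega>_def by blast
  have cases: "\<And>P. P \<in> ?Q \<Longrightarrow> space P = \<Omega> \<and> sets P = sets (borel_of (path_top X T)) \<and>
       (prob_space P \<or> (\<forall>A. emeasure P A = 0))"
  proof -
    fix P assume "P \<in> ?Q"
    then obtain qq where P: "P = kcomp_seq X qq T" and k: "\<forall>t\<in>{1..T}. stoch_kernel X t (qq t)"
      unfolding QT_def by auto
    show "space P = \<Omega> \<and> sets P = sets (borel_of (path_top X T)) \<and> (prob_space P \<or> (\<forall>A. emeasure P A = 0))"
      using kcomp_seq_cases[OF k] P \<Omega>_def by simp
  qed
  \<comment> \<open>from curvature: QT nonempty and no null measures\<close>
  have x02: "0 < x0/2" "x0/2 < x0" using x0 by auto
  have L0: "(\<lambda>n. INF P\<in>?Q. ereal (measure (completion P) (A (x0/2) 0 n))) \<longlonglongrightarrow> 1"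
    using curv'[OF x02] by simp
  have ne: "?Q \<noteq> {}"
  proof
    assume "?Q = {}"
    then have "(\<lambda>n::nat. \<infinity>::ereal) \<longlonglongrightarrow> 1" using L0 by (simp add: top_ereal_def)
    then have "(\<infinity>::ereal) = 1" by (rule LIMSEQ_const_iff[THEN iffD1])
    then show False by simp
  qed
  have "\<forall>\<^sub>F n in sequentially. ereal (1/2) < (INF P\<in>?Q. ereal (measure (completion P) (A (x0/2) 0 n)))"
    using order_tendstoD(1)[OF L0] by simp
  then obtain N0 where N0: "ereal (1/2) < (INF P\<in>?Q. ereal (measure (completion P) (A (x0/2) 0 N0)))"
    by (auto simp: eventually_sequentially)
  have prob: "\<And>P. P \<in> ?Q \<Longrightarrow> prob_space P"
  proof -
    fix P assume P: "P \<in> ?Q"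
    show "prob_space P"
    proof (rule ccontr)
      assume "\<not> prob_space P"
      then have "\<forall>A. emeasure P A = 0" using cases[OF P] by auto
      then have "\<forall>A. emeasure (completion P) A = 0" by (rule null_completion)
      then have "measure (completion P) (A (x0/2) 0 N0) = 0" by (simp add: measure_def)
      moreover have "(INF P\<in>?Q. ereal (measure (completion P) (A (x0/2) 0 N0))) \<le> ereal (measure (completion P) (A (x0/2) 0 N0))"
        using P by (rule INF_lower)
      ultimately have "ereal (1/2) < ereal 0" using N0 by (metis order_less_le_trans)
      then show False by simp
    qed
  qed
  have probc: "\<And>P. P \<in> ?Q \<Longrightarrow> prob_space (completion P)"
    using prob prob_space.prob_space_completion by blast
  have spc: "\<And>P. P \<in> ?Q \<Longrightarrow> space (completion P) = \<Omega>" using cases by simp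
  have umeas: "\<And>P f. P \<in> ?Q \<Longrightarrow> univ_measurable (path_top X T) f \<Longrightarrow> f \<in> borel_measurable (completion P)"
  proof -
    fix P f assume P: "P \<in> ?Q" and u: "univ_measurable (path_top X T) f"
    show "f \<in> borel_measurable (completion P)"
      by (rule univ_meas[OF prob[OF P] _ u]) (use cases[OF P] in blast)
  qed
  have Umeas: "\<And>P n y. P \<in> ?Q \<Longrightarrow> y > 0 \<Longrightarrow> (\<lambda>\<omega>. U n \<omega> y) \<in> borel_measurable (completion P)"
  proof -
    fix P n and y :: real assume P: "P \<in> ?Q" and y: "y > 0"
    have "univ_measurable (path_top X T) (\<lambda>\<omega>. U n \<omega> y)"
      using util y unfolding random_utility_def by simp
    then show "(\<lambda>\<omega>. U n \<omega> y) \<in> borel_measurable (completion P)" by (rule umeas[OF P])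
  qed
  have Uprop: "concave_on {0<..} (U n \<omega>) \<and> strict_mono_on {0<..} (U n \<omega>) \<and>
        (\<forall>x>0. U n \<omega> differentiable at x \<and> deriv (U n \<omega>) differentiable at x) \<and>
        continuous_on {0<..} (deriv (deriv (U n \<omega>)))" if w: "\<omega> \<in> \<Omega>" for n \<omega>
  proof -
    have "random_utility X T (U n)" using util by (rule spec)
    then have "\<forall>\<omega>\<in>path_space X T. concave_on {0<..} (U n \<omega>) \<and> strict_mono_on {0<..} (U n \<omega>) \<and>
        (\<forall>x>0. U n \<omega> differentiable at x \<and> deriv (U n \<omega>) differentiable at x) \<and>
        continuous_on {0<..} (deriv (deriv (U n \<omega>)))" unfolding random_utility_def by (rule conjunct2)
    then show ?thesis using w unfolding \<Omega>_def by (rule bspec)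
  qed
  obtain B where B0: "B \<ge> 0" and Bb: "\<And>n P. P \<in> ?Q \<Longrightarrow>
      (\<integral>\<^sup>+\<omega>. ennreal (max (U n \<omega> x0) 0) \<partial>(completion P)) \<le> ennreal B"
  proof -
    define R where "R = (SUP n. rnorm X Q T 1 (\<lambda>\<omega>. max (U n \<omega> x0) 0))"
    define s where "s = (\<lambda>n. SUP P\<in>?Q. \<integral>\<^sup>+\<omega>. ennreal (\<bar>max (U n \<omega> x0) 0\<bar> powr 1) \<partial>(completion P))"
    have rn: "rnorm X Q T 1 (\<lambda>\<omega>. max (U n \<omega> x0) 0) = (if s n = \<infinity> then \<infinity> else ereal (enn2real (s n) powr 1))" for n
      unfolding rnorm_def s_def Let_def by simp
    have le: "rnorm X Q T 1 (\<lambda>\<omega>. max (U n \<omega> x0) 0) \<le> R" for n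
      unfolding R_def by (rule SUP_upper) simp
    have Rinf: "R < \<infinity>" using pos unfolding R_def .
    have sfin: "s n \<noteq> \<infinity>" for n
    proof
      assume "s n = \<infinity>"
      then have "(\<infinity>::ereal) \<le> R" using le[of n] rn[of n] by simp
      then show False using Rinf by simp
    qed
    have sR: "ereal (enn2real (s n)) \<le> R" for n
      using le[of n] rn[of n] sfin[of n] by simp
    have R0: "0 \<le> R" using sR[of 0] by (metis enn2real_nonneg ereal_less_eq(5) order_trans)
    define B where "B = real_of_ereal R"
    have RB: "R = ereal B" using R0 Rinf unfolding B_def by (cases R) auto
    show ?thesis
    proof (rule that)
      show "0 \<le> B" using R0 RB by simp
      fix n P assume P: "P \<in> ?Q"
      have "(\<integral>\<^sup>+\<omega>. ennreal (max (U n \<omega> x0) 0) \<partial>(completion P)) =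
            (\<integral>\<^sup>+\<omega>. ennreal (\<bar>max (U n \<omega> x0) 0\<bar> powr 1) \<partial>(completion P))"
        by simp
      also have "\<dots> \<le> s n" unfolding s_def using P by (rule SUP_upper)
      also have "\<dots> = ennreal (enn2real (s n))" using sfin[of n] by (simp add: ennreal_enn2real_if)
      also have "\<dots> \<le> ennreal B" using sR[of n] RB by (intro ennreal_leI) simp
      finally show "(\<integral>\<^sup>+\<omega>. ennreal (max (U n \<omega> x0) 0) \<partial>(completion P)) \<le> ennreal B" .
    qed
  qed
  show ?thesis
  proof (intro allI impI)
    fix x M :: real assume x: "0 \<le> x \<and> x < x0" and M: "M \<ge> 0"
    define x' where "x' = (if x = 0 then x0/2 else x)"
    have x': "0 < x'" "x' < x0" using x x0 unfolding x'_def by auto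
    define S where "S = (\<lambda>n. {\<omega>\<in>\<Omega>. util_ext (U n) \<omega> x \<le> - ereal M})"
    define S' where "S' = (\<lambda>n. {\<omega>\<in>\<Omega>. U n \<omega> x' \<le> - M})"
    have ue0: "util_ext (U n) \<omega> 0 = (INF k. ereal (U n \<omega> (1 / Suc k)))" if w: "\<omega> \<in> \<Omega>" for n \<omega>
    proof -
      have "strict_mono_on {0<..} (U n \<omega>)" using Uprop[OF w] by (rule conjunct1[OF conjunct2])
      then have "mono_on {0<..} (U n \<omega>)" by (rule strict_mono_on_imp_mono_on)
      then have "((\<lambda>y. ereal (U n \<omega> y)) \<longlongrightarrow> (INF k. ereal (U n \<omega> (1 / Suc k)))) (at_right 0)"
        by (rule lim_right0)
      then have "Lim (at_right 0) (\<lambda>y. ereal (U n \<omega> y)) = (INF k. ereal (U n \<omega> (1 / Suc k)))"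
        by (intro tendsto_Lim) simp_all
      then show ?thesis by (simp add: util_ext_def)
    qed
    have SS': "S' n \<subseteq> S n" for n
    proof
      fix \<omega> assume "\<omega> \<in> S' n"
      then have w: "\<omega> \<in> \<Omega>" and le: "U n \<omega> x' \<le> - M" by (auto simp: S'_def)
      show "\<omega> \<in> S n"
      proof (cases "x = 0")
        case False
        then have "x > 0" "x' = x" using x by (auto simp: x'_def)
        then show ?thesis using w le by (simp add: S_def util_ext_def)
      next
        case True
        obtain k :: nat where k: "1 / Suc k < x'" using x'(1) by (metis nat_approx_posE)
        have sm: "strict_mono_on {0<..} (U n \<omega>)" using Uprop[OF w] by (rule conjunct1[OF conjunct2])
        have u1: "U n \<omega> (1 / Suc k) \<le> U n \<omega> x'"
          by (rule mono_onD[OF strict_mono_on_imp_mono_on[OF sm]]) (use k x' in auto)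
        have "(INF k. ereal (U n \<omega> (1 / Suc k))) \<le> ereal (U n \<omega> (1 / Suc k))" by (rule INF_lower) simp
        also have "\<dots> \<le> ereal (U n \<omega> x')" using u1 by simp
        also have "ereal (U n \<omega> x') \<le> - ereal M" using le by simp
        finally show ?thesis using True w ue0[OF w] by (simp add: S_def)
      qed
    qed
    have Smeas: "S n \<in> sets (completion P)" if P: "P \<in> ?Q" for n P
    proof (cases "x = 0")
      case False
      then have "x > 0" using x by auto
      then have "S n = {\<omega>\<in>space (completion P). U n \<omega> x \<le> - M}"
        using spc[OF P] by (auto simp: S_def util_ext_def)
      then show ?thesis using set_le_meas[OF Umeas[OF P \<open>x > 0\<close>]] by simp
    next
      case True
      have eqS: "S n = {\<omega>\<in>space (completion P). (INF k. ereal (U n \<omega> (1 / Suc k))) \<le> - ereal M}"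
        unfolding S_def spc[OF P] True by (rule Collect_cong) (auto simp: ue0)
      have m: "(\<lambda>\<omega>. INF k. ereal (U n \<omega> (1 / Suc k))) \<in> borel_measurable (completion P)"
        by (rule inf_meas) (rule Umeas[OF P], simp)
      show ?thesis unfolding eqS by (rule set_le_meas_e[OF m])
    qed
    have S'meas: "S' n \<in> sets (completion P)" if P: "P \<in> ?Q" for n P
    proof -
      have "S' n = {\<omega>\<in>space (completion P). U n \<omega> x' \<le> - M}"
        using spc[OF P] by (auto simp: S'_def)
      then show ?thesis using set_le_meas[OF Umeas[OF P x'(1)]] by simp
    qed
    have upper: "measure (completion P) (S n) \<le> 1" if P: "P \<in> ?Q" for n P
      using probc[OF P] by (rule prob_space.prob_le_1)
    have lower: "\<exists>N. \<forall>n\<ge>N. \<forall>P\<in>?Q. measure (completion P) (S n) > 1 - \<delta>" if d: "\<delta> > 0" and d1: "\<delta> \<le> 1" for \<delta>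
    proof -
      define K where "K = 2 * B / \<delta> + 1"
      define C where "C = 2 * (K + M)"
      define \<epsilon> where "\<epsilon> = x0 - x'"
      have K: "K > 0" using B0 d unfolding K_def by (simp add: add_nonneg_pos)
      have BK: "B / K \<le> \<delta> / 2"
      proof -
        have "B \<le> \<delta> / 2 * K" using d B0 unfolding K_def by (simp add: field_simps)
        then show ?thesis using K by (simp add: divide_le_eq)
      qed
      have C: "C \<ge> 0" using K M unfolding C_def by simp
      have e: "0 < \<epsilon>" "\<epsilon> < x0" using x' unfolding \<epsilon>_def by auto
      have Lc: "(\<lambda>n. INF P\<in>?Q. ereal (measure (completion P) (A \<epsilon> C n))) \<longlonglongrightarrow> 1"
        by (rule curv'[OF e C])
      have "\<forall>\<^sub>F n in sequentially. ereal (1 - \<delta>/2) < (INF P\<in>?Q. ereal (measure (completion P) (A \<epsilon> C n)))"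
        by (rule order_tendstoD(1)[OF Lc]) (use d in simp)
      then obtain N where N: "\<And>n. n \<ge> N \<Longrightarrow> ereal (1 - \<delta>/2) < (INF P\<in>?Q. ereal (measure (completion P) (A \<epsilon> C n)))"
        by (auto simp: eventually_sequentially)
      show ?thesis
      proof (intro exI[of _ N] allI impI ballI)
        fix n P assume n: "N \<le> n" and P: "P \<in> ?Q"
        interpret cp: prob_space "completion P" by (rule probc[OF P])
        have "ereal (1 - \<delta>/2) < ereal (measure (completion P) (A \<epsilon> C n))"
          using N[OF n] INF_lower[OF P, of "\<lambda>P. ereal (measure (completion P) (A \<epsilon> C n))"]
          by (meson order_less_le_trans)
        then have mA: "measure (completion P) (A \<epsilon> C n) > 1 - \<delta>/2" by simp
        have Ameas: "A \<epsilon> C n \<in> sets (completion P)"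
        proof (rule ccontr)
          assume "A \<epsilon> C n \<notin> sets (completion P)"
          then have "measure (completion P) (A \<epsilon> C n) = 0" by (rule measure_notin_sets)
          then show False using mA d1 by simp
        qed
        define Bc where "Bc = {\<omega>\<in>\<Omega>. K < max (U n \<omega> x0) 0}"
        have fm: "(\<lambda>\<omega>. max (U n \<omega> x0) 0) \<in> borel_measurable (completion P)"
          using Umeas[OF P x0] by measurable
        have Bcm: "Bc \<in> sets (completion P)"
          using set_less_meas[OF fm, of K] spc[OF P] by (simp add: Bc_def)
        have "(\<integral>\<^sup>+\<omega>. ennreal K * indicator Bc \<omega> \<partial>(completion P)) \<le>
              (\<integral>\<^sup>+\<omega>. ennreal (max (U n \<omega> x0) 0) \<partial>(completion P))"
        proof (rule nn_integral_mono)
          fix \<omega> assume "\<omega> \<in> space (completion P)"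
          show "ennreal K * indicator Bc \<omega> \<le> ennreal (max (U n \<omega> x0) 0)"
            using K by (cases "\<omega> \<in> Bc") (auto simp: Bc_def max_def intro!: ennreal_leI split: if_splits)
        qed
        also have "\<dots> \<le> ennreal B" by (rule Bb[OF P])
        finally have "ennreal K * emeasure (completion P) Bc \<le> ennreal B"
          using nn_integral_cmult_indicator[OF Bcm] by simp
        then have "ennreal (K * measure (completion P) Bc) \<le> ennreal B"
          using K by (simp add: cp.emeasure_eq_measure ennreal_mult)
        then have "K * measure (completion P) Bc \<le> B" using B0 by (simp add: ennreal_le_iff)
        then have mB: "measure (completion P) Bc \<le> \<delta> / 2"
          using K BK by (smt (verit) mult.commute pos_le_divide_eq)
        have sub: "A \<epsilon> C n \<subseteq> S' n \<union> Bc"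
        proof
          fix \<omega> assume wA: "\<omega> \<in> A \<epsilon> C n"
          then have w: "\<omega> \<in> \<Omega>" and I: "integral {x0 - \<epsilon>/2..x0} (\<lambda>v. deriv (deriv (U n \<omega>)) v) < - C / \<epsilon>"
            by (auto simp: A_def)
          show "\<omega> \<in> S' n \<union> Bc"
          proof (cases "\<omega> \<in> Bc")
            case False
            then have UK: "U n \<omega> x0 \<le> K" using w by (auto simp: Bc_def)
            have "U n \<omega> x' \<le> U n \<omega> x0 - C / 2"
              using Uprop[OF w] x' C I unfolding \<epsilon>_def
              by (intro det_bound[of "U n \<omega>" x' x0 C]) auto
            moreover have "C / 2 = K + M" by (simp add: C_def)
            ultimately have "U n \<omega> x' \<le> - M" using UK by linarith
            then show ?thesis using w by (simp add: S'_def)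
          qed simp
        qed
        have "measure (completion P) (A \<epsilon> C n) \<le> measure (completion P) (S' n \<union> Bc)"
          using sub S'meas[OF P] Bcm by (intro cp.finite_measure_mono) auto
        also have "\<dots> \<le> measure (completion P) (S' n) + measure (completion P) Bc"
          using S'meas[OF P] Bcm by (intro measure_Un_le) (auto simp: cp.emeasure_eq_measure)
        also have "measure (completion P) (S' n) \<le> measure (completion P) (S n)"
          using SS' Smeas[OF P] by (intro cp.finite_measure_mono)
        finally show "measure (completion P) (S n) > 1 - \<delta>"
          using mA mB by simp
      qed
    qed
    show "(\<lambda>n. INF P\<in>?Q. ereal (measure (completion P)
          {\<omega>\<in>path_space X T. util_ext (U n) \<omega> x \<le> - ereal M})) \<longlonglongrightarrow> 1"
    proof -
      have Seq: "\<And>n. {\<omega>\<in>path_space X T. util_ext (U n) \<omega> x \<le> - ereal M} = S n"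
        by (simp add: S_def \<Omega>_def)
      show ?thesis unfolding Seq
    proof (rule order_tendstoI)
      fix a :: ereal assume "a < 1"
      then obtain r0 where r0: "a < ereal r0" "ereal r0 < 1" using ereal_dense2 by blast
      define r where "r = max r0 0"
      have r: "a < ereal r" "ereal r < 1" using r0 unfolding r_def
        by (auto simp: max_def intro: order_less_le_trans)
      then have r1: "r < 1" by simp
      have rr: "r \<ge> 0" by (simp add: r_def)
      obtain N where N: "\<forall>n\<ge>N. \<forall>P\<in>?Q. measure (completion P) (S n) > 1 - (1 - r)/2"
        using lower[of "(1 - r)/2"] r1 rr by auto
      show "\<forall>\<^sub>F n in sequentially. a < (INF P\<in>?Q. ereal (measure (completion P) (S n)))"
        unfolding eventually_sequentially
      proof (intro exI[of _ N] allI impI)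
        fix n assume "N \<le> n"
        then have "ereal (1 - (1 - r)/2) \<le> (INF P\<in>?Q. ereal (measure (completion P) (S n)))"
          using N by (intro INF_greatest) (auto intro: less_imp_le)
        moreover have "ereal r < ereal (1 - (1 - r)/2)" using r1 by (simp add: field_simps)
        ultimately show "a < (INF P\<in>?Q. ereal (measure (completion P) (S n)))"
          using r(1) by (meson order_less_le_trans order_less_trans)
      qed
    next
      fix a :: ereal assume a: "1 < a"
      obtain P0 where P0: "P0 \<in> ?Q" using ne by auto
      show "\<forall>\<^sub>F n in sequentially. (INF P\<in>?Q. ereal (measure (completion P) (S n))) < a"
      proof (rule always_eventually, rule allI)
        fix n
        have "(INF P\<in>?Q. ereal (measure (completion P) (S n))) \<le> ereal (measure (completion P0) (S n))"
          using P0 by (rule INF_lower)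
        also have "\<dots> \<le> 1" using upper[OF P0] by simp
        finally show "(INF P\<in>?Q. ereal (measure (completion P) (S n))) < a" using a by simp
      qed
    qed
    qed
  qed
qed

end
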